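(* Let $n\ge0$ and $m\ge n+2$. Then $L_n^{n+1}=L_n^m$, i.e. for every set of formulas $\Gamma$ and formula $\alpha$, $\Gamma\vdash_{L_n^{n+1}}\alpha$ iff $\Gamma\vdash_{L_n^m}\alpha$.
   Context: Formulas are built from a countable set of propositional variables using unary $\neg,\circ$ and binary $\land,\lor,\to$; $\circ^0\alpha=\alpha$, $\circ^{m+1}\alpha=\circ(\circ^m\alpha)$, $\alpha\leftrightarrow\beta:=(\alpha\to\beta)\land(\beta\to\alpha)$. mbC is the Hilbert calculus with the axiom schemas of a standard axiomatization of positive classical propositional logic in $\land,\lor,\to$, plus (TND) $\alpha\lor\neg\alpha$ and (bc1) $\circ\alpha\to(\alpha\to(\neg\alpha\to\beta))$, modus ponens being the only rule; mbCciw is mbC plus (ciw) $\circ\alpha\lor(\alpha\land\neg\alpha)$. For $n\ge0$, $k\ge1$, $L_n^k$ is mbCciw plus (cc$^n$) $\circ^{n+2}\alpha$, (dn) $\neg\neg\alpha\leftrightarrow\alpha$, and (ip$^j$) $\neg\circ^j\neg\alpha\leftrightarrow\neg\circ^j\alpha$ for each $1\le j<k$. $\Gamma\vdash_L\alpha$ denotes derivability of $\alpha$ from $\Gamma$ in $L$. *)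

theory Defs
  imports Main
begin

datatype fm =
    Var nat
  | Neg fm
  | Circ fm
  | Conj fm fm
  | Disj fm fm
  | Imp fm fm

definition Iff :: "fm \<Rightarrow> fm \<Rightarrow> fm" where
  "Iff a b = Conj (Imp a b) (Imp b a)"

primrec circ_pow :: "nat \<Rightarrow> fm \<Rightarrow> fm" where
  "circ_pow 0 a = a"
| "circ_pow (Suc m) a = Circ (circ_pow m a)"

inductive pos_ax :: "fm \<Rightarrow> bool" where
  Ax1: "pos_ax (Imp a (Imp b a))"
| Ax2: "pos_ax (Imp (Imp a b) (Imp (Imp a (Imp b c)) (Imp a c)))"
| Ax3: "pos_ax (Imp a (Imp b (Conj a b)))"
| Ax4: "pos_ax (Imp (Conj a b) a)"
| Ax5: "pos_ax (Imp (Conj a b) b)"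
| Ax6: "pos_ax (Imp a (Disj a b))"
| Ax7: "pos_ax (Imp b (Disj a b))"
| Ax8: "pos_ax (Imp (Imp a c) (Imp (Imp b c) (Imp (Disj a b) c)))"
| Ax9: "pos_ax (Disj a (Imp a b))"

inductive mbCciw_ax :: "fm \<Rightarrow> bool" where
  pos: "pos_ax a \<Longrightarrow> mbCciw_ax a"
| TND: "mbCciw_ax (Disj a (Neg a))"
| bc1: "mbCciw_ax (Imp (Circ a) (Imp a (Imp (Neg a) b)))"
| ciw: "mbCciw_ax (Disj (Circ a) (Conj a (Neg a)))"

inductive L_ax :: "nat \<Rightarrow> nat \<Rightarrow> fm \<Rightarrow> bool" where
  base: "mbCciw_ax a \<Longrightarrow> L_ax n k a"
| cc: "L_ax n k (circ_pow (n + 2) a)"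
| dn: "L_ax n k (Iff (Neg (Neg a)) a)"
| ip: "1 \<le> j \<Longrightarrow> j < k \<Longrightarrow>
        L_ax n k (Iff (Neg (circ_pow j (Neg a))) (Neg (circ_pow j a)))"

inductive derives :: "nat \<Rightarrow> nat \<Rightarrow> fm set \<Rightarrow> fm \<Rightarrow> bool" where
  hyp: "a \<in> \<Gamma> \<Longrightarrow> derives n k \<Gamma> a"
| ax: "L_ax n k a \<Longrightarrow> derives n k \<Gamma> a"
| mp: "derives n k \<Gamma> a \<Longrightarrow> derives n k \<Gamma> (Imp a b) \<Longrightarrow> derives n k \<Gamma> b"

end

theory Submission
  imports Defs
begin

lemma cp_add: "circ_pow (i + j) x = circ_pow i (circ_pow j x)"
  by (induction i) auto

lemma D_mono: "derives n k \<Gamma> a \<Longrightarrow> \<Gamma> \<subseteq> \<Delta> \<Longrightarrow> derives n k \<Delta> a"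
  by (induction rule: derives.induct) (auto intro: derives.intros)

lemma D_pos: "pos_ax a \<Longrightarrow> derives n k \<Gamma> a"
  by (intro derives.ax L_ax.base mbCciw_ax.pos)

lemma D_MP: "derives n k \<Gamma> (Imp a b) \<Longrightarrow> derives n k \<Gamma> a \<Longrightarrow> derives n k \<Gamma> b"
  using derives.mp by blast

lemma D_I: "derives n k \<Gamma> (Imp a a)"
proof -
  have 1: "derives n k \<Gamma> (Imp a (Imp (Imp a a) a))" by (intro D_pos pos_ax.intros)
  have 2: "derives n k \<Gamma> (Imp a (Imp a a))" by (intro D_pos pos_ax.intros)
  have 3: "derives n k \<Gamma> (Imp (Imp a (Imp a a)) (Imp (Imp a (Imp (Imp a a) a)) (Imp a a)))"
    by (intro D_pos pos_ax.intros)
  show ?thesis using D_MP[OF D_MP[OF 3 2] 1] .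
qed

lemma D_ded: "derives n k (insert A \<Gamma>) B \<Longrightarrow> derives n k \<Gamma> (Imp A B)"
proof (induction n k "insert A \<Gamma>" B rule: derives.induct)
  case (hyp a n k)
  show ?case
  proof (cases "a = A")
    case True then show ?thesis using D_I by simp
  next
    case False
    then have "a \<in> \<Gamma>" using hyp by auto
    then show ?thesis using D_MP[OF D_pos[OF pos_ax.Ax1] derives.hyp] by blast
  qed
next
  case (ax n k a)
  then show ?case using D_MP[OF D_pos[OF pos_ax.Ax1] derives.ax] by blast
next
  case (mp n k a b)
  then show ?case using D_MP[OF D_MP[OF D_pos[OF pos_ax.Ax2]]] by blast
qed

lemma D_hyp: "derives n k (insert a \<Gamma>) a"
  by (rule derives.hyp) simp

lemma D_w: "derives n k \<Gamma> a \<Longrightarrow> derives n k (insert b \<Gamma>) a"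
  by (erule D_mono) auto

lemma D_conjE1: "derives n k \<Gamma> (Conj a b) \<Longrightarrow> derives n k \<Gamma> a"
  using D_MP[OF D_pos[OF pos_ax.Ax4]] by blast
lemma D_conjE2: "derives n k \<Gamma> (Conj a b) \<Longrightarrow> derives n k \<Gamma> b"
  using D_MP[OF D_pos[OF pos_ax.Ax5]] by blast
lemma D_conjI: "derives n k \<Gamma> a \<Longrightarrow> derives n k \<Gamma> b \<Longrightarrow> derives n k \<Gamma> (Conj a b)"
  using D_MP[OF D_MP[OF D_pos[OF pos_ax.Ax3]]] by blast

lemma D_cases: "derives n k \<Gamma> (Disj A B) \<Longrightarrow> derives n k (insert A \<Gamma>) C
   \<Longrightarrow> derives n k (insert B \<Gamma>) C \<Longrightarrow> derives n k \<Gamma> C"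
  using D_MP[OF D_MP[OF D_MP[OF D_pos[OF pos_ax.Ax8]]]] D_ded by blast

lemma D_L: "L_ax n k a \<Longrightarrow> derives n k \<Gamma> a"
  by (rule derives.ax)

lemma D_M: "mbCciw_ax a \<Longrightarrow> derives n k \<Gamma> a"
  by (intro derives.ax L_ax.base)

lemma D_explode: "derives n k \<Gamma> (Circ y) \<Longrightarrow> derives n k \<Gamma> y \<Longrightarrow> derives n k \<Gamma> (Neg y)
   \<Longrightarrow> derives n k \<Gamma> C"
  using D_MP[OF D_MP[OF D_MP[OF D_M[OF mbCciw_ax.bc1]]]] by blast

lemma D_M_lemma:
  assumes "derives n k \<Gamma> (Imp y2 (Imp (Neg y2) y1))"
      and "derives n k \<Gamma> (Imp y2 (Imp (Neg y2) (Neg y1)))"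
  shows "derives n k \<Gamma> (Imp (Circ y1) (Circ y2))"
proof (rule D_ded)
  let ?G = "insert (Circ y1) \<Gamma>"
  have c: "derives n k ?G (Disj (Circ y2) (Conj y2 (Neg y2)))" by (rule D_M, rule mbCciw_ax.ciw)
  show "derives n k ?G (Circ y2)"
  proof (rule D_cases[OF c])
    show "derives n k (insert (Circ y2) ?G) (Circ y2)" by (rule D_hyp)
  next
    let ?H = "insert (Conj y2 (Neg y2)) ?G"
    have h1: "derives n k ?H y2" by (rule D_conjE1, rule D_hyp)
    have h2: "derives n k ?H (Neg y2)" by (rule D_conjE2, rule D_hyp)
    have a1: "derives n k ?H (Imp y2 (Imp (Neg y2) y1))" using assms(1) by (rule D_mono) auto
    have a2: "derives n k ?H (Imp y2 (Imp (Neg y2) (Neg y1)))" using assms(2) by (rule D_mono) auto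
    show "derives n k ?H (Circ y2)"
      by (rule D_explode[of _ _ _ y1]) (auto intro: D_MP[OF D_MP] a1 a2 h1 h2 derives.hyp)
  qed
qed

lemma D_N_lemma:
  assumes "derives n k \<Gamma> (Imp z w)" and "derives n k \<Gamma> (Circ w)"
  shows "derives n k \<Gamma> (Imp (Neg w) (Neg z))"
proof (rule D_ded)
  let ?G = "insert (Neg w) \<Gamma>"
  have c: "derives n k ?G (Disj z (Neg z))" by (rule D_M, rule mbCciw_ax.TND)
  show "derives n k ?G (Neg z)"
  proof (rule D_cases[OF c])
    let ?H = "insert z ?G"
    have a1: "derives n k ?H (Imp z w)" using assms(1) by (rule D_mono) auto
    have a2: "derives n k ?H (Circ w)" using assms(2) by (rule D_mono) auto
    show "derives n k ?H (Neg z)"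
      by (rule D_explode[OF a2]) (auto intro: D_MP[OF a1] derives.hyp)
  qed (rule D_hyp)
qed

lemma D_iffD1: "derives n k \<Gamma> (Iff a b) \<Longrightarrow> derives n k \<Gamma> (Imp a b)"
  unfolding Iff_def by (rule D_conjE1)
lemma D_iffD2: "derives n k \<Gamma> (Iff a b) \<Longrightarrow> derives n k \<Gamma> (Imp b a)"
  unfolding Iff_def by (rule D_conjE2)

lemma D_base1: "derives n k \<Gamma> (Imp (Circ a) (Circ (Neg a)))"
proof (rule D_M_lemma)
  show "derives n k \<Gamma> (Imp (Neg a) (Imp (Neg (Neg a)) a))"
    by (intro D_ded) (rule D_MP[OF D_iffD1[OF D_L[OF L_ax.dn]]], rule D_hyp)
  show "derives n k \<Gamma> (Imp (Neg a) (Imp (Neg (Neg a)) (Neg a)))"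
    by (intro D_ded) (rule D_w, rule D_hyp)
qed

lemma D_base2: "derives n k \<Gamma> (Imp (Circ (Neg a)) (Circ a))"
proof (rule D_M_lemma)
  show "derives n k \<Gamma> (Imp a (Imp (Neg a) (Neg a)))"
    by (intro D_ded) (rule D_hyp)
  show "derives n k \<Gamma> (Imp a (Imp (Neg a) (Neg (Neg a))))"
    by (intro D_ded) (rule D_MP[OF D_iffD2[OF D_L[OF L_ax.dn]]], rule D_w, rule D_hyp)
qed

lemma D_ind:
  "1 \<le> i \<Longrightarrow> i \<le> k \<Longrightarrow> derives n k \<Gamma> (Imp (circ_pow i (Neg a)) (circ_pow i a))
     \<and> derives n k \<Gamma> (Imp (circ_pow i a) (circ_pow i (Neg a)))"
proof (induction i arbitrary: \<Gamma>)
  case 0 then show ?case by simp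
next
  case (Suc i)
  show ?case
  proof (cases "i = 0")
    case True then show ?thesis using D_base1 D_base2 by simp
  next
    case False
    then have IH: "\<And>\<Gamma>. derives n k \<Gamma> (Imp (circ_pow i (Neg a)) (circ_pow i a))
     \<and> derives n k \<Gamma> (Imp (circ_pow i a) (circ_pow i (Neg a)))" using Suc by auto
    have ip: "derives n k \<Gamma> (Iff (Neg (circ_pow i (Neg a))) (Neg (circ_pow i a)))"
      using False Suc.prems by (intro D_L L_ax.ip) auto
    have A: "derives n k \<Gamma> (Imp (Circ (circ_pow i a)) (Circ (circ_pow i (Neg a))))"
    proof (rule D_M_lemma)
      show "derives n k \<Gamma> (Imp (circ_pow i (Neg a)) (Imp (Neg (circ_pow i (Neg a))) (circ_pow i a)))"
        by (intro D_ded) (rule D_MP[OF conjunct1[OF IH]], rule D_w, rule D_hyp)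
      show "derives n k \<Gamma> (Imp (circ_pow i (Neg a)) (Imp (Neg (circ_pow i (Neg a))) (Neg (circ_pow i a))))"
        by (intro D_ded) (rule D_MP[OF D_iffD1[OF D_w[OF D_w[OF ip]]]], rule D_hyp)
    qed
    have B: "derives n k \<Gamma> (Imp (Circ (circ_pow i (Neg a))) (Circ (circ_pow i a)))"
    proof (rule D_M_lemma)
      show "derives n k \<Gamma> (Imp (circ_pow i a) (Imp (Neg (circ_pow i a)) (circ_pow i (Neg a))))"
        by (intro D_ded) (rule D_MP[OF conjunct2[OF IH]], rule D_w, rule D_hyp)
      show "derives n k \<Gamma> (Imp (circ_pow i a) (Imp (Neg (circ_pow i a)) (Neg (circ_pow i (Neg a)))))"
        by (intro D_ded) (rule D_MP[OF D_iffD2[OF D_w[OF D_w[OF ip]]]], rule D_hyp)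
    qed
    show ?thesis using A B by simp
  qed
qed

lemma D_cc: "j \<ge> n + 2 \<Longrightarrow> derives n k \<Gamma> (circ_pow j x)"
proof -
  assume "j \<ge> n + 2"
  then obtain d where "j = (n + 2) + d" by (metis le_add_diff_inverse)
  then show ?thesis using cp_add[of "n+2" d x] by (simp only:) (intro D_L L_ax.cc)
qed

lemma D_iffI: "derives n k \<Gamma> (Imp a b) \<Longrightarrow> derives n k \<Gamma> (Imp b a) \<Longrightarrow> derives n k \<Gamma> (Iff a b)"
  unfolding Iff_def by (rule D_conjI)

lemma D_ip_high:
  assumes "j \<ge> n + 1"
  shows "derives n (n + 1) \<Gamma> (Iff (Neg (circ_pow j (Neg a))) (Neg (circ_pow j a)))"
proof -
  have c1: "derives n (n+1) \<Gamma> (Circ (circ_pow j x))" for x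
    using D_cc[of n "Suc j" "n+1" \<Gamma> x] assms by simp
  have i1: "derives n (n+1) \<Gamma> (Imp (circ_pow j a) (circ_pow j (Neg a)))
        \<and> derives n (n+1) \<Gamma> (Imp (circ_pow j (Neg a)) (circ_pow j a))"
  proof (cases "j = n + 1")
    case True then show ?thesis using D_ind[of j "n+1" n \<Gamma> a] by simp
  next
    case False
    then have "j \<ge> n + 2" using assms by simp
    then show ?thesis
      using D_MP[OF D_pos[OF pos_ax.Ax1] D_cc] by blast
  qed
  show ?thesis
    by (rule D_iffI; rule D_N_lemma) (use i1 c1 in auto)
qed

lemma L_ax_down:
  assumes "L_ax n m a" shows "derives n (n + 1) \<Gamma> a"
  using assms
proof (cases rule: L_ax.cases)
  case (ip j b)
  show ?thesis
  proof (cases "j < n + 1")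
    case True then show ?thesis using ip by (intro D_L) (auto intro: L_ax.ip)
  next
    case False then show ?thesis using ip by (simp only:) (intro D_ip_high, simp)
  qed
qed (auto intro: D_L L_ax.intros L_ax.cc[simplified])

lemma L_ax_up: "L_ax n k a \<Longrightarrow> k \<le> m \<Longrightarrow> L_ax n m a"
  by (induction rule: L_ax.induct) (auto intro: L_ax.intros L_ax.cc[simplified])

lemma D_up: "derives n k \<Gamma> a \<Longrightarrow> k \<le> m \<Longrightarrow> derives n m \<Gamma> a"
  by (induction rule: derives.induct) (auto intro: derives.intros L_ax_up)

theorem theorem28:
  fixes n m :: nat
  assumes "m \<ge> n + 2"
  shows "\<forall>\<Gamma> \<alpha>. derives n (n + 1) \<Gamma> \<alpha> \<longleftrightarrow> derives n m \<Gamma> \<alpha>"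
proof (intro allI iffI)
  fix \<Gamma> \<alpha>
  assume "derives n (n + 1) \<Gamma> \<alpha>"
  then show "derives n m \<Gamma> \<alpha>"
    using D_up assms by simp
next
  fix \<Gamma> \<alpha>
  assume "derives n m \<Gamma> \<alpha>"
  then show "derives n (n + 1) \<Gamma> \<alpha>"
    by (induction rule: derives.induct) (auto intro: derives.intros L_ax_down[simplified])
qed

end
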